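(* Let $q\ge4$ be even and let $B(n,m)$ be the number of $m$-RLL strings in $\Sigma_q^n$. If $m\ge\lceil\log_{q/2}n\rceil+1$, then $B(n,m)\ge q^n-2q^{n-1}\ge q^n/2$.
   Context: $\Sigma_q=\{0,\dots,q-1\}$, $\boldsymbol{x}_{[a,b]}=x_a\cdots x_b$. The complement on $\Sigma_q$ is $\overline{a}=a+1$ if $a$ is even and $\overline{a}=a-1$ if $a$ is odd (so $\{a,\overline a\}=\{2\lfloor a/2\rfloor,2\lfloor a/2\rfloor+1\}$). In $\boldsymbol{x}\in\Sigma_q^n$, a substring $\boldsymbol{x}_{[i,j]}$ ($i\le j$) is a run if all its entries lie in $\{x_i,\overline{x_i}\}$ and it is maximal, i.e. $x_{i-1}\notin\{x_i,\overline{x_i}\}$ when $i>1$ and $x_{j+1}\notin\{x_i,\overline{x_i}\}$ when $j<n$. A string is $m$-runlength-limited ($m$-RLL) if each of its runs has length at most $m$. *)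

theory Defs
  imports Complex_Main
begin

text \<open>Strings over Sigma_q = {0,...,q-1} are lists; positions are 0-indexed
  (position k of the list is x_{k+1} in the paper).\<close>

definition compl :: "nat \<Rightarrow> nat" where
  "compl a = (if even a then a + 1 else a - 1)"

definition is_run :: "nat list \<Rightarrow> nat \<Rightarrow> nat \<Rightarrow> bool" where
  "is_run x i j \<longleftrightarrow> i \<le> j \<and> j < length x
     \<and> (\<forall>k. i \<le> k \<and> k \<le> j \<longrightarrow> x ! k \<in> {x ! i, compl (x ! i)})
     \<and> (0 < i \<longrightarrow> x ! (i - 1) \<notin> {x ! i, compl (x ! i)})
     \<and> (j + 1 < length x \<longrightarrow> x ! (j + 1) \<notin> {x ! i, compl (x ! i)})"

definition RLL :: "nat \<Rightarrow> nat list \<Rightarrow> bool" where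
  "RLL m x \<longleftrightarrow> (\<forall>i j. is_run x i j \<longrightarrow> j - i + 1 \<le> m)"

definition strings :: "nat \<Rightarrow> nat \<Rightarrow> nat list set" where
  "strings q n = {x. length x = n \<and> set x \<subseteq> {..<q}}"

definition B :: "nat \<Rightarrow> nat \<Rightarrow> nat \<Rightarrow> nat" where
  "B q n m = card {x \<in> strings q n. RLL m x}"

end

theory Submission
  imports Defs
begin

lemma strings_eq: "strings q n = {xs. set xs \<subseteq> {..<q} \<and> length xs = n}"
  unfolding strings_def by auto

lemma card_strings: "card (strings q n) = q ^ n"
  unfolding strings_eq by (simp add: card_lists_length_eq)

lemma finite_strings: "finite (strings q n)"
  unfolding strings_eq by (simp add: finite_lists_length_eq)

lemma compl_div: "y \<in> {a, compl a} \<Longrightarrow> y div 2 = a div 2"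
  by (auto simp: compl_def elim!: oddE)

definition Win :: "nat \<Rightarrow> nat \<Rightarrow> nat \<Rightarrow> nat \<Rightarrow> nat list set" where
  "Win q n m i = {x \<in> strings q n. \<forall>k. i \<le> k \<and> k \<le> i + m \<longrightarrow> x ! k div 2 = x ! i div 2}"

lemma bad_sub:
  assumes "x \<in> strings q n" "\<not> RLL m x"
  shows "x \<in> (\<Union>i\<in>{..<n-m}. Win q n m i)"
proof -
  from assms(2) obtain i j where r: "is_run x i j" and l: "\<not> j - i + 1 \<le> m"
    unfolding RLL_def by auto
  have len: "length x = n" using assms(1) by (simp add: strings_def)
  from r have ij: "i \<le> j" "j < n" using len by (auto simp: is_run_def)
  have "\<forall>k. i \<le> k \<and> k \<le> i + m \<longrightarrow> x ! k div 2 = x ! i div 2"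
  proof (intro allI impI)
    fix k assume kk: "i \<le> k \<and> k \<le> i + m"
    then have "k \<le> j" using l ij by linarith
    then have "x ! k \<in> {x ! i, compl (x ! i)}" using r kk unfolding is_run_def by blast
    then show "x ! k div 2 = x ! i div 2" by (rule compl_div)
  qed
  moreover have "i < n - m" using ij l by auto
  ultimately show ?thesis using assms(1) unfolding Win_def by auto
qed

lemma card_Win:
  assumes "i + m < n" "even q"
  shows "card (Win q n m i) \<le> q ^ (n - m - 1) * (q div 2) * 2 ^ (m + 1)"
proof -
  let ?T = "strings q (n - m - 1) \<times> {..<q div 2} \<times> strings 2 (m + 1)"
  let ?f = "\<lambda>x. (take i x @ drop (i + m + 1) x, x ! i div 2, map (\<lambda>c. c mod 2) (take (m + 1) (drop i x)))"
  have fin: "finite ?T" by (simp add: finite_strings)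
  have cardT: "card ?T = q ^ (n - m - 1) * (q div 2) * 2 ^ (m + 1)"
    by (simp add: card_cartesian_product card_strings)
  have img: "?f ` Win q n m i \<subseteq> ?T"
  proof
    fix y assume "y \<in> ?f ` Win q n m i"
    then obtain x where x: "x \<in> Win q n m i" and y: "y = ?f x" by auto
    have len: "length x = n" and st: "set x \<subseteq> {..<q}" using x by (auto simp: Win_def strings_def)
    have "x ! i \<in> set x" using len assms by auto
    then have "x ! i < q" using st by auto
    then have a: "x ! i div 2 < q div 2" using assms(2) by (auto elim!: evenE)
    have b: "set (take i x @ drop (i + m + 1) x) \<subseteq> {..<q}"
      using st set_take_subset[of i x] set_drop_subset[of "i+m+1" x] by auto
    have c: "length (take i x @ drop (i + m + 1) x) = n - m - 1" using len assms by auto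
    have d: "set (map (\<lambda>c. c mod 2) (take (m + 1) (drop i x))) \<subseteq> {..<2}" by auto
    have e: "length (map (\<lambda>c. c mod 2) (take (m + 1) (drop i x))) = m + 1" using len assms by auto
    show "y \<in> ?T" unfolding y using a b c d e by (simp add: strings_def)
  qed
  have inj: "inj_on ?f (Win q n m i)"
  proof (rule inj_onI)
    fix x z assume x: "x \<in> Win q n m i" and z: "z \<in> Win q n m i" and eq: "?f x = ?f z"
    have lx: "length x = n" and lz: "length z = n" using x z by (auto simp: Win_def strings_def)
    have wx: "\<And>k. i \<le> k \<Longrightarrow> k \<le> i + m \<Longrightarrow> x ! k div 2 = x ! i div 2" using x unfolding Win_def by blast
    have wz: "\<And>k. i \<le> k \<Longrightarrow> k \<le> i + m \<Longrightarrow> z ! k div 2 = z ! i div 2" using z unfolding Win_def by blast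
    have e1: "take i x @ drop (i + m + 1) x = take i z @ drop (i + m + 1) z"
      and e2: "x ! i div 2 = z ! i div 2"
      and e3: "map (\<lambda>c. c mod 2) (take (m + 1) (drop i x)) = map (\<lambda>c. c mod 2) (take (m + 1) (drop i z))"
      using eq by auto
    have lt: "length (take i x) = length (take i z)" using lx lz assms by auto
    have "take i x = take i z \<and> drop (i + m + 1) x = drop (i + m + 1) z"
      using e1 lt append_eq_append_conv by blast
    then have t: "take i x = take i z" and dr: "drop (i + m + 1) x = drop (i + m + 1) z" by simp_all
    show "x = z"
    proof (rule nth_equalityI)
      show "length x = length z" using lx lz by simp
      fix k assume k: "k < length x"
      consider "k < i" | "i \<le> k \<and> k \<le> i + m" | "i + m < k" by linarith
      then show "x ! k = z ! k"
      proof cases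
        case 1
        then show ?thesis using t by (metis nth_take)
      next
        case 2
        have "map (\<lambda>c. c mod 2) (take (m + 1) (drop i x)) ! (k - i) = map (\<lambda>c. c mod 2) (take (m + 1) (drop i z)) ! (k - i)"
          using e3 by simp
        have kl: "k - i < length (take (m + 1) (drop i x))" "k - i < length (take (m + 1) (drop i z))"
          using 2 lx lz k by auto
        have "take (m + 1) (drop i x) ! (k - i) = x ! k" "take (m + 1) (drop i z) ! (k - i) = z ! k"
          using 2 lx lz k by auto
        then have m2: "x ! k mod 2 = z ! k mod 2" using kl \<open>map _ _ ! (k - i) = _\<close> by (metis nth_map)
        have "x ! k div 2 = x ! i div 2" using wx 2 by blast
        moreover have "z ! k div 2 = z ! i div 2" using wz 2 by blast
        ultimately have d2: "x ! k div 2 = z ! k div 2" using e2 by simp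
        show ?thesis using m2 d2 by (metis div_mult_mod_eq)
      next
        case 3
        have "drop (i + m + 1) x ! (k - (i + m + 1)) = drop (i + m + 1) z ! (k - (i + m + 1))"
          using dr by simp
        then show ?thesis using 3 lx lz k by auto
      qed
    qed
  qed
  show ?thesis using card_inj_on_le[OF inj img fin] cardT by simp
qed

lemma key_ineq:
  fixes h n m :: nat
  assumes "n \<le> h ^ (m - 1)" "m \<ge> 1"
  shows "(n - m) * (2 * h) ^ (n - m - 1) * h * 2 ^ (m + 1) \<le> 2 * (2 * h) ^ (n - 1)"
proof (cases "m < n")
  case False then show ?thesis by simp
next
  case True
  have e: "(2 * h) ^ (n - 1) = (2 * h) ^ (n - m - 1) * (2 ^ m * h ^ m)"
  proof -
    have nn: "n - 1 = (n - m - 1) + m" using True by simp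
    show ?thesis by (subst nn) (simp only: power_add power_mult_distrib)
  qed
  have hm: "h ^ m = h * h ^ (m - 1)" using assms(2) by (cases m) simp_all
  have "(n - m) * h \<le> h ^ m" unfolding hm using assms(1)
    by (metis diff_le_self le_trans mult.commute mult_le_mono2)
  then have "(n - m) * h * 2 ^ (m + 1) \<le> 2 * (2 ^ m * h ^ m)"
    by simp
  then have "(2 * h) ^ (n - m - 1) * ((n - m) * h * 2 ^ (m + 1)) \<le> (2 * h) ^ (n - m - 1) * (2 * (2 ^ m * h ^ m))"
    by (rule mult_le_mono2)
  then show ?thesis unfolding e by (simp add: ac_simps)
qed

theorem lemma11:
  fixes q n m :: nat
  assumes "even q" and "q \<ge> 4" and "n \<ge> 1"
    and "int m \<ge> \<lceil>log (real q / 2) (real n)\<rceil> + 1"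
  shows "real (B q n m) \<ge> real q ^ n - 2 * real q ^ (n - 1)
         \<and> real q ^ n - 2 * real q ^ (n - 1) \<ge> real q ^ n / 2"
proof -
  obtain h where q: "q = 2 * h" using assms(1) by (auto elim: evenE)
  have h2: "h \<ge> 2" using assms(2) q by simp
  have rq: "real q / 2 = real h" using q by simp
  have L0: "log (real h) (real n) \<ge> 0" using h2 assms(3) by simp
  have L1: "log (real h) (real n) \<le> of_int \<lceil>log (real h) (real n)\<rceil>" by (rule le_of_int_ceiling)
  have A4: "int m \<ge> \<lceil>log (real h) (real n)\<rceil> + 1" using assms(4) rq by simp
  have c0: "\<lceil>log (real h) (real n)\<rceil> \<ge> 0" using L0 by simp
  have m1: "m \<ge> 1" using A4 c0 by linarith
  have "of_int \<lceil>log (real h) (real n)\<rceil> \<le> real (m - 1)"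
  proof -
    have "\<lceil>log (real h) (real n)\<rceil> \<le> int (m - 1)" using A4 m1 by linarith
    then show ?thesis by simp
  qed
  then have "log (real h) (real n) \<le> real (m - 1)" using L1 by linarith
  then have "real n \<le> real h powr real (m - 1)"
    using h2 assms(3) by (simp add: log_le_iff)
  then have "real n \<le> real (h ^ (m - 1))" using h2 by (simp add: powr_realpow)
  then have hn: "n \<le> h ^ (m - 1)" by linarith
  define S where "S = strings q n"
  define G where "G = {x \<in> S. RLL m x}"
  define Bd where "Bd = {x \<in> S. \<not> RLL m x}"
  have finS: "finite S" unfolding S_def by (rule finite_strings)
  have cS: "card S = card G + card Bd"
  proof -
    have "S = G \<union> Bd" "G \<inter> Bd = {}" unfolding G_def Bd_def by auto
    moreover have "finite G" "finite Bd" using finS unfolding G_def Bd_def by auto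
    ultimately show ?thesis using card_Un_disjoint by metis
  qed
  have BG: "B q n m = card G" unfolding B_def G_def S_def by simp
  have sub: "Bd \<subseteq> (\<Union>i\<in>{..<n-m}. Win q n m i)" unfolding Bd_def S_def using bad_sub by blast
  have finU: "finite (\<Union>i\<in>{..<n-m}. Win q n m i)"
    by (rule finite_subset[OF _ finite_strings[of q n]]) (auto simp: Win_def)
  have "card Bd \<le> card (\<Union>i\<in>{..<n-m}. Win q n m i)" by (rule card_mono[OF finU sub])
  also have "\<dots> \<le> (\<Sum>i\<in>{..<n-m}. card (Win q n m i))" by (rule card_UN_le) simp
  also have "\<dots> \<le> (\<Sum>i\<in>{..<n-m}. q ^ (n - m - 1) * (q div 2) * 2 ^ (m + 1))"
    by (rule sum_mono) (rule card_Win, auto simp: assms(1))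
  also have "\<dots> = (n - m) * (2 * h) ^ (n - m - 1) * h * 2 ^ (m + 1)" using q by simp
  also have "\<dots> \<le> 2 * (2 * h) ^ (n - 1)" by (rule key_ineq[OF hn m1])
  finally have cB: "card Bd \<le> 2 * q ^ (n - 1)" using q by simp
  have "card S = q ^ n" unfolding S_def by (rule card_strings)
  then have "real (B q n m) = real q ^ n - real (card Bd)" using cS BG
    by (simp flip: of_nat_power)
  moreover have "real (card Bd) \<le> 2 * real q ^ (n - 1)"
  proof -
    have "real (card Bd) \<le> real (2 * q ^ (n - 1))" using cB by (rule of_nat_mono)
    then show ?thesis by simp
  qed
  ultimately have part1: "real (B q n m) \<ge> real q ^ n - 2 * real q ^ (n - 1)" by linarith
  have qn: "real q ^ n = real q * real q ^ (n - 1)" using assms(3)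
    by (cases n) simp_all
  have "4 * real q ^ (n - 1) \<le> real q * real q ^ (n - 1)"
    using assms(2) by (intro mult_right_mono) auto
  then have part2: "real q ^ n - 2 * real q ^ (n - 1) \<ge> real q ^ n / 2" using qn by linarith
  show ?thesis using part1 part2 by simp
qed

end
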